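(* The only LW-surfaces of Riemann-type are: (1) the surfaces of revolution; (2) the classical Riemann examples of minimal surfaces.
   Context: A surface $S$ in Euclidean space $\mathbb{R}^3$ with principal curvatures $\kappa_1,\kappa_2$ is called a linear Weingarten surface (LW-surface) if $\kappa_1=m\,\kappa_2+n$ for real constants $m,n$, where $m\neq 0$ is assumed (so that no principal curvature vanishes identically) and the umbilical case ($\kappa_1=\kappa_2$) is excluded. A cyclic surface is a surface determined by a smooth uniparametric family of pieces of circles; it is of Riemann-type if the planes containing the circles of the foliation are parallel. Locally such a surface can be written as $X(u,v)=(a(u),b(u),u)+r(u)(\cos v,\sin v,0)$ with smooth $a,b$ and radius $r>0$; it is a surface of revolution iff $a,b$ are constant. The classical Riemann examples are the minimal surfaces ($(m,n)=(-1,0)$) of this form with $a'=\lambda r^2$, $b'=\mu r^2$ for constants $\lambda,\mu$ with $\lambda^2+\mu^2\neq 0$, and $1+(\lambda^2+\mu^2)r^4+r'^2-r r''=0$ (the case $\lambda^2+\mu^2=0$ giving the catenoid). *)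

theory Defs
  imports "HOL-Analysis.Analysis"
begin

definition smooth_on :: "real set \<Rightarrow> (real \<Rightarrow> real) \<Rightarrow> bool" where
  "smooth_on S f \<longleftrightarrow> (\<forall>k. \<forall>u\<in>S. ((deriv ^^ k) f) differentiable (at u))"

definition Xu :: "(real \<Rightarrow> real \<Rightarrow> real^3) \<Rightarrow> real \<Rightarrow> real \<Rightarrow> real^3" where
  "Xu X u v = vector_derivative (\<lambda>t. X t v) (at u)"
definition Xv :: "(real \<Rightarrow> real \<Rightarrow> real^3) \<Rightarrow> real \<Rightarrow> real \<Rightarrow> real^3" where
  "Xv X u v = vector_derivative (\<lambda>s. X u s) (at v)"
definition Xuu :: "(real \<Rightarrow> real \<Rightarrow> real^3) \<Rightarrow> real \<Rightarrow> real \<Rightarrow> real^3" where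
  "Xuu X u v = vector_derivative (\<lambda>t. Xu X t v) (at u)"
definition Xuv :: "(real \<Rightarrow> real \<Rightarrow> real^3) \<Rightarrow> real \<Rightarrow> real \<Rightarrow> real^3" where
  "Xuv X u v = vector_derivative (\<lambda>s. Xu X u s) (at v)"
definition Xvv :: "(real \<Rightarrow> real \<Rightarrow> real^3) \<Rightarrow> real \<Rightarrow> real \<Rightarrow> real^3" where
  "Xvv X u v = vector_derivative (\<lambda>s. Xv X u s) (at v)"

definition unit_normal :: "(real \<Rightarrow> real \<Rightarrow> real^3) \<Rightarrow> real \<Rightarrow> real \<Rightarrow> real^3" where
  "unit_normal X u v = (1 / norm (cross3 (Xu X u v) (Xv X u v))) *\<^sub>R cross3 (Xu X u v) (Xv X u v)"

definition fE where "fE X u v = Xu X u v \<bullet> Xu X u v"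
definition fF where "fF X u v = Xu X u v \<bullet> Xv X u v"
definition fG where "fG X u v = Xv X u v \<bullet> Xv X u v"
definition sL where "sL X u v = Xuu X u v \<bullet> unit_normal X u v"
definition sM where "sM X u v = Xuv X u v \<bullet> unit_normal X u v"
definition sN where "sN X u v = Xvv X u v \<bullet> unit_normal X u v"

definition mean_curv :: "(real \<Rightarrow> real \<Rightarrow> real^3) \<Rightarrow> real \<Rightarrow> real \<Rightarrow> real" where
  "mean_curv X u v = (fE X u v * sN X u v - 2 * fF X u v * sM X u v + fG X u v * sL X u v)
      / (2 * (fE X u v * fG X u v - (fF X u v)^2))"
definition gauss_curv :: "(real \<Rightarrow> real \<Rightarrow> real^3) \<Rightarrow> real \<Rightarrow> real \<Rightarrow> real" where
  "gauss_curv X u v = (sL X u v * sN X u v - (sM X u v)^2) / (fE X u v * fG X u v - (fF X u v)^2)"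

definition kappa1 where
  "kappa1 X u v = mean_curv X u v + sqrt ((mean_curv X u v)^2 - gauss_curv X u v)"
definition kappa2 where
  "kappa2 X u v = mean_curv X u v - sqrt ((mean_curv X u v)^2 - gauss_curv X u v)"

text \<open>Linear Weingarten surface on domain D: non-umbilic at every point, and the principal
  curvatures (labelled consistently on D) satisfy kappa_1 = m kappa_2 + n, m nonzero.\<close>
definition LW_surface :: "(real \<Rightarrow> real \<Rightarrow> real^3) \<Rightarrow> (real \<times> real) set \<Rightarrow> real \<Rightarrow> real \<Rightarrow> bool" where
  "LW_surface X D m n \<longleftrightarrow> m \<noteq> 0 \<and>
     (\<forall>(u,v)\<in>D. kappa1 X u v \<noteq> kappa2 X u v) \<and>
     ((\<forall>(u,v)\<in>D. kappa1 X u v = m * kappa2 X u v + n) \<or>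
      (\<forall>(u,v)\<in>D. kappa2 X u v = m * kappa1 X u v + n))"

definition riemann_type_surf :: "(real \<Rightarrow> real) \<Rightarrow> (real \<Rightarrow> real) \<Rightarrow> (real \<Rightarrow> real) \<Rightarrow> real \<Rightarrow> real \<Rightarrow> real^3" where
  "riemann_type_surf a b r u v = vector [a u + r u * cos v, b u + r u * sin v, u]"

end

theory Submission
  imports Defs "HOL-Complex_Analysis.Complex_Analysis"
begin


lemma vec3_axis: "(vector [x,y,z] :: real^3) = x *\<^sub>R axis 1 1 + y *\<^sub>R axis 2 1 + z *\<^sub>R axis 3 1"
  by (simp add: vec_eq_iff forall_3 axis_def)

lemma vd3:
  assumes "(f1 has_real_derivative d1) (at x)" "(f2 has_real_derivative d2) (at x)" "(f3 has_real_derivative d3) (at x)"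
  shows "((\<lambda>t. vector [f1 t, f2 t, f3 t] :: real^3) has_vector_derivative vector [d1,d2,d3]) (at x)"
proof -
  have "((\<lambda>t. f1 t *\<^sub>R axis 1 1 + f2 t *\<^sub>R axis 2 1 + f3 t *\<^sub>R axis 3 1) has_vector_derivative
     (d1 *\<^sub>R axis 1 1 + d2 *\<^sub>R axis 2 1 + d3 *\<^sub>R axis 3 (1::real) :: real^3)) (at x)"
    using assms by (auto intro!: derivative_eq_intros)
  then show ?thesis by (simp only: vec3_axis)
qed

lemma inner3: "(vector [a1,a2,a3] :: real^3) \<bullet> vector [b1,b2,b3] = a1*b1 + a2*b2 + a3*b3"
  by (simp add: inner_vec_def sum_3)

lemma cross3v: "cross3 (vector [a1,a2,a3]) (vector [b1,b2,b3]) = (vector [a2*b3 - a3*b2, a3*b1 - a1*b3, a1*b2 - a2*b1] :: real^3)"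
  by (simp add: cross3_def)

lemma scale3: "c *\<^sub>R (vector [a1,a2,a3] :: real^3) = vector [c*a1, c*a2, c*a3]"
  by (simp add: vec_eq_iff forall_3)

lemma norm3: "norm (vector [a1,a2,a3] :: real^3) = sqrt (a1^2+a2^2+a3^2)"
  by (simp add: norm_eq_sqrt_inner inner3 power2_eq_square)

context
  fixes a b r :: "real \<Rightarrow> real" and I :: "real set"
  assumes I: "open I"
    and da: "\<And>t. t \<in> I \<Longrightarrow> (a has_real_derivative deriv a t) (at t)"
    and db: "\<And>t. t \<in> I \<Longrightarrow> (b has_real_derivative deriv b t) (at t)"
    and dr: "\<And>t. t \<in> I \<Longrightarrow> (r has_real_derivative deriv r t) (at t)"
begin

lemma Xu_eq: "t \<in> I \<Longrightarrow> Xu (riemann_type_surf a b r) t v =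
   vector [deriv a t + deriv r t * cos v, deriv b t + deriv r t * sin v, 1]"
  unfolding Xu_def riemann_type_surf_def
  by (rule vector_derivative_at, rule vd3) (auto intro!: derivative_eq_intros da db dr)

lemma Xv_eq: "Xv (riemann_type_surf a b r) t v = vector [- r t * sin v, r t * cos v, 0]"
  unfolding Xv_def riemann_type_surf_def
  by (rule vector_derivative_at, rule vd3) (auto intro!: derivative_eq_intros)

lemma Xvv_eq: "Xvv (riemann_type_surf a b r) t v = vector [- r t * cos v, - r t * sin v, 0]"
  unfolding Xvv_def Xv_eq
  by (rule vector_derivative_at, rule vd3) (auto intro!: derivative_eq_intros)

lemma Xuv_eq: assumes "t \<in> I" shows "Xuv (riemann_type_surf a b r) t v = vector [- deriv r t * sin v, deriv r t * cos v, 0]"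
  unfolding Xuv_def Xu_eq[OF assms]
  by (rule vector_derivative_at, rule vd3) (auto intro!: derivative_eq_intros)

lemma Xuu_eq:
  assumes u: "u \<in> I"
    and "(deriv a has_real_derivative deriv (deriv a) u) (at u)"
    and "(deriv b has_real_derivative deriv (deriv b) u) (at u)"
    and "(deriv r has_real_derivative deriv (deriv r) u) (at u)"
  shows "Xuu (riemann_type_surf a b r) u v =
     vector [deriv (deriv a) u + deriv (deriv r) u * cos v, deriv (deriv b) u + deriv (deriv r) u * sin v, 0]"
  unfolding Xuu_def
proof (rule vector_derivative_at, rule has_vector_derivative_transform_within_open[OF _ I u])
  show "((\<lambda>t. vector [deriv a t + deriv r t * cos v, deriv b t + deriv r t * sin v, 1] :: real^3) has_vector_derivative
     vector [deriv (deriv a) u + deriv (deriv r) u * cos v, deriv (deriv b) u + deriv (deriv r) u * sin v, 0]) (at u)"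
    by (rule vd3) (auto intro!: derivative_eq_intros assms)
qed (simp add: Xu_eq)

end


lemma cs_trick: "c^2+s^2 = (1::real) \<Longrightarrow> X - Y = k * (c^2+s^2-1) \<Longrightarrow> X = Y" by simp

lemma curv_formulas:
  fixes X :: "real \<Rightarrow> real \<Rightarrow> real^3"
  assumes hu: "Xu X u v = vector [p + \<rho> * c, q + \<rho> * s, 1]"
    and hv: "Xv X u v = vector [- r * s, r * c, 0]"
    and huu: "Xuu X u v = vector [p1 + r2 * c, q1 + r2 * s, 0]"
    and huv: "Xuv X u v = vector [- \<rho> * s, \<rho> * c, 0]"
    and hvv: "Xvv X u v = vector [- r * c, - r * s, 0]"
    and cs: "c^2 + s^2 = 1" and r: "r > 0"
  defines "w \<equiv> p * c + q * s + \<rho>"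
  defines "Dd \<equiv> sqrt (1 + w^2)"
  defines "A \<equiv> p1 * c + q1 * s + r2"
  defines "S \<equiv> 1 + (p + \<rho> * c)^2 + (q + \<rho> * s)^2 - r * A"
  shows "mean_curv X u v = S / (2 * r * Dd^3)" and "gauss_curv X u v = - A / (r * Dd^4)"
proof -
  have Dd2: "Dd^2 = 1 + w^2" unfolding Dd_def by simp
  have Ddp: "Dd > 0" unfolding Dd_def by (simp add: add_pos_nonneg)
  have cr: "cross3 (Xu X u v) (Xv X u v) = vector [- r * c, - r * s, r * w]"
    unfolding hu hv cross3v w_def
    by (simp add: vec_eq_iff forall_3, rule cs_trick[OF cs, where k="\<rho>*r"]) (simp add: algebra_simps power2_eq_square)
  have nr: "norm (cross3 (Xu X u v) (Xv X u v)) = r * Dd"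
  proof -
    have "(- r * c)^2 + (- r * s)^2 + (r * w)^2 = (r * Dd)^2"
      by (rule cs_trick[OF cs, where k="r^2"]) (unfold power_mult_distrib Dd2, simp add: algebra_simps power2_eq_square)
    then show ?thesis unfolding cr norm3 using r Ddp by simp
  qed
  have un: "unit_normal X u v = vector [- c / Dd, - s / Dd, w / Dd]"
    unfolding unit_normal_def nr unfolding cr scale3 using r Ddp by simp
  have E: "fE X u v = (p + \<rho> * c)^2 + (q + \<rho> * s)^2 + 1"
    unfolding fE_def hu inner3 by (simp add: power2_eq_square)
  have F: "fF X u v = r * (q * c - p * s)"
    unfolding fF_def hu hv inner3 by (simp add: algebra_simps)
  have G: "fG X u v = r^2"
    unfolding fG_def hv inner3 by (rule cs_trick[OF cs, where k="r^2"]) (simp add: algebra_simps power2_eq_square)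
  have L: "sL X u v = - A / Dd"
    unfolding sL_def huu un inner3 A_def by (rule cs_trick[OF cs, where k="-r2/Dd"]) (use Ddp in \<open>simp add: field_simps power2_eq_square\<close>)
  have M: "sM X u v = 0"
    unfolding sM_def huv un inner3 by (simp add: field_simps)
  have N: "sN X u v = r / Dd"
    unfolding sN_def hvv un inner3 by (rule cs_trick[OF cs, where k="r/Dd"]) (use Ddp in \<open>simp add: field_simps power2_eq_square\<close>)
  have EGF: "fE X u v * fG X u v - (fF X u v)^2 = r^2 * Dd^2"
  proof -
    have "(p + \<rho> * c)^2 + (q + \<rho> * s)^2 + 1 - (q * c - p * s)^2 = 1 + w^2"
    proof -
      have "(p + \<rho> * c)^2 + (q + \<rho> * s)^2 + 1 - (q * c - p * s)^2 - (1 + w^2)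
            = (p^2 + q^2 - \<rho>^2) * (1 - (c^2 + s^2))"
        unfolding w_def by (simp add: algebra_simps power2_eq_square)
      then show ?thesis using cs by simp
    qed
    then have "r^2 * ((p + \<rho> * c)^2 + (q + \<rho> * s)^2 + 1 - (q * c - p * s)^2) = r^2 * (1 + w^2)" by simp
    then show ?thesis unfolding E F G Dd2 by (simp add: algebra_simps power2_eq_square)
  qed
  show "mean_curv X u v = S / (2 * r * Dd^3)"
    unfolding mean_curv_def EGF
    unfolding M L N G E S_def
    using r Ddp by (simp add: field_simps power2_eq_square power3_eq_cube)
  show "gauss_curv X u v = - A / (r * Dd^4)"
    unfolding gauss_curv_def EGF
    unfolding M L N
    using r Ddp by (simp add: field_simps power2_eq_square eval_nat_numeral)
qed



lemma quad_common:
  fixes a2 a0 b2 al b0 k :: complex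
  assumes a2: "a2 \<noteq> 0" and a0: "a0 \<noteq> 0" and disc: "k^2 - 4*a2*a0 \<noteq> 0"
    and H: "\<And>\<xi>. \<xi> \<noteq> 0 \<Longrightarrow> a2*\<xi>^2 - k*\<xi> + a0 = 0 \<Longrightarrow> b2*\<xi>^2 + al*\<xi> + b0 = 0"
  shows "b2 * k + al * a2 = 0 \<and> b0 * a2 = b2 * a0"
proof -
  define d where "d = csqrt (k^2 - 4*a2*a0)"
  have d2: "d^2 = k^2 - 4*a2*a0" unfolding d_def by simp
  have d0: "d \<noteq> 0" using disc d2 by auto
  define x1 where "x1 = (k + d) / (2*a2)"
  define x2 where "x2 = (k - d) / (2*a2)"
  have r1: "a2*x1^2 - k*x1 + a0 = 0"
  proof -
    have "a2*x1^2 - k*x1 + a0 = (d^2 - k^2 + 4*a2*a0)/(4*a2)"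
      unfolding x1_def using a2 by (simp add: field_simps power2_eq_square)
    also have "\<dots> = 0" using d2 by simp
    finally show ?thesis .
  qed
  have r2: "a2*x2^2 - k*x2 + a0 = 0"
  proof -
    have "a2*x2^2 - k*x2 + a0 = (d^2 - k^2 + 4*a2*a0)/(4*a2)"
      unfolding x2_def using a2 by (simp add: field_simps power2_eq_square)
    also have "\<dots> = 0" using d2 by simp
    finally show ?thesis .
  qed
  have n1: "x1 \<noteq> 0" using r1 a0 by auto
  have n2: "x2 \<noteq> 0" using r2 a0 by auto
  have e1: "b2*x1^2 + al*x1 + b0 = 0" using H n1 r1 by blast
  have e2: "b2*x2^2 + al*x2 + b0 = 0" using H n2 r2 by blast
  have "(x1 - x2) * (b2 * (x1 + x2) + al) = (b2*x1^2 + al*x1 + b0) - (b2*x2^2 + al*x2 + b0)"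
    by (simp add: algebra_simps power2_eq_square)
  then have "(x1 - x2) * (b2 * (x1 + x2) + al) = 0" using e1 e2 by simp
  moreover have "x1 - x2 \<noteq> 0" unfolding x1_def x2_def using a2 d0 by (simp add: field_simps)
  ultimately have "b2 * (x1 + x2) + al = 0" by simp
  moreover have "x1 + x2 = k / a2" unfolding x1_def x2_def using a2 by (simp add: field_simps)
  ultimately have s1: "b2 * k + al * a2 = 0" using a2 by (simp add: field_simps)
  have "x1 * x2 = (k^2 - d^2) / (4*a2^2)" unfolding x1_def x2_def using a2
    by (simp add: field_simps power2_eq_square)
  also have "\<dots> = a0 / a2" unfolding d2 using a2 by (simp add: field_simps power2_eq_square)
  finally have p12: "x1 * x2 = a0 / a2" .
  have "b0 = b2 * (x1 * x2)"
  proof -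
    have "b2 * (x1 + x2) + al = 0" by fact
    then have "al = - b2 * (x1 + x2)" by (simp add: algebra_simps eq_neg_iff_add_eq_0)
    with e1 show ?thesis by (simp add: algebra_simps power2_eq_square)
  qed
  then have "b0 * a2 = b2 * a0" using p12 a2 by (simp add: field_simps)
  with s1 show ?thesis by simp
qed

lemma roots_lemma:
  fixes p q \<rho> al be ga :: real
  assumes pq: "p \<noteq> 0 \<or> q \<noteq> 0"
    and H: "\<And>z::complex. 1 + (of_real p * cos z + of_real q * sin z + of_real \<rho>)^2 = 0 \<Longrightarrow>
              of_real al + of_real be * cos z + of_real ga * sin z = 0"
  shows "al = 0 \<and> be = 0 \<and> ga = 0"
proof -
  define a2 :: complex where "a2 = (of_real p - \<i> * of_real q)/2"
  define a0 :: complex where "a0 = (of_real p + \<i> * of_real q)/2"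
  define b2 :: complex where "b2 = (of_real be - \<i> * of_real ga)/2"
  define b0 :: complex where "b0 = (of_real be + \<i> * of_real ga)/2"
  have a2: "a2 \<noteq> 0" using pq unfolding a2_def by (auto simp: complex_eq_iff)
  have a0: "a0 \<noteq> 0" using pq unfolding a0_def by (auto simp: complex_eq_iff)
  have a20: "4 * a2 * a0 = of_real (p^2 + q^2)" unfolding a2_def a0_def
    by (simp add: field_simps power2_eq_square)
  have cz: "cos (- \<i> * Ln \<xi>) = (\<xi> + 1/\<xi>)/2 \<and> sin (- \<i> * Ln \<xi>) = (\<xi> - 1/\<xi>)/(2*\<i>)" if "\<xi> \<noteq> 0" for \<xi>
  proof -
    have e1: "exp (\<i> * (- \<i> * Ln \<xi>)) = \<xi>" using that by simp
    have e2: "exp (- (\<i> * (- \<i> * Ln \<xi>))) = 1/\<xi>" using that by (simp add: exp_minus inverse_eq_divide)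
    show ?thesis unfolding cos_exp_eq[of "- \<i> * Ln \<xi>"] sin_exp_eq[of "- \<i> * Ln \<xi>"] e1 e2 by simp
  qed
  have key: "b2*\<xi>^2 + of_real al*\<xi> + b0 = 0"
    if k2: "\<kappa>^2 = -1" and x0: "\<xi> \<noteq> 0" and eq: "a2*\<xi>^2 - (\<kappa> - of_real \<rho>)*\<xi> + a0 = 0" for \<kappa> \<xi>
  proof -
    define z where "z = - \<i> * Ln \<xi>"
    have c: "cos z = (\<xi> + 1/\<xi>)/2" and s: "sin z = (\<xi> - 1/\<xi>)/(2*\<i>)" using cz[OF x0] unfolding z_def by auto
    have w: "of_real p * cos z + of_real q * sin z = (a2*\<xi>^2 + a0)/\<xi>"
      unfolding c s a2_def a0_def using x0 by (simp add: field_simps power2_eq_square)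
    have "a2*\<xi>^2 + a0 = (\<kappa> - of_real \<rho>)*\<xi>" using eq by (simp add: algebra_simps)
    then have "of_real p * cos z + of_real q * sin z + of_real \<rho> = \<kappa>" unfolding w using x0 by simp
    then have "1 + (of_real p * cos z + of_real q * sin z + of_real \<rho>)^2 = 0" using k2 by simp
    then have h: "of_real al + of_real be * cos z + of_real ga * sin z = 0" by (rule H)
    have "of_real al + of_real be * cos z + of_real ga * sin z = (b2*\<xi>^2 + of_real al*\<xi> + b0)/\<xi>"
      unfolding c s b2_def b0_def using x0 by (simp add: field_simps power2_eq_square)
    with h x0 show ?thesis by simp
  qed
  have disc: "(\<kappa> - of_real \<rho>)^2 - 4*a2*a0 \<noteq> 0" if k: "\<kappa> = \<i> \<or> \<kappa> = - \<i>" for \<kappa>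
  proof
    assume "(\<kappa> - of_real \<rho>)^2 - 4*a2*a0 = 0"
    then have z: "(\<kappa> - of_real \<rho>)^2 - of_real (p^2 + q^2) = 0" using a20 by (simp add: mult.assoc)
    have "Re ((\<kappa> - of_real \<rho>)^2 - of_real (p^2 + q^2)) = \<rho>^2 - 1 - p^2 - q^2"
      using k by (auto simp: power2_eq_square)
    then have re: "\<rho>^2 - 1 - p^2 - q^2 = 0" using z by simp
    have "Im ((\<kappa> - of_real \<rho>)^2 - of_real (p^2 + q^2)) = (if \<kappa> = \<i> then -2*\<rho> else 2*\<rho>)"
      using k by (auto simp: power2_eq_square)
    then have "(if \<kappa> = \<i> then -2*\<rho> else 2*\<rho>) = 0" using z by simp
    then have "\<rho> = 0" by (auto split: if_splits)
    moreover have "p^2 \<ge> 0" "q^2 \<ge> 0" by auto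
    ultimately show False using re by (simp, linarith)
  qed
  have kI: "b2*\<xi>^2 + of_real al*\<xi> + b0 = 0" if "\<xi> \<noteq> 0" "a2*\<xi>^2 - (\<i> - of_real \<rho>)*\<xi> + a0 = 0" for \<xi>
    by (rule key[of "\<i>"]) (use that in auto)
  have kJ: "b2*\<xi>^2 + of_real al*\<xi> + b0 = 0" if "\<xi> \<noteq> 0" "a2*\<xi>^2 - (- \<i> - of_real \<rho>)*\<xi> + a0 = 0" for \<xi>
    by (rule key[of "- \<i>"]) (use that in auto)
  have Q1: "b2 * (\<i> - of_real \<rho>) + of_real al * a2 = 0 \<and> b0 * a2 = b2 * a0"
    by (rule quad_common[OF a2 a0 disc[of "\<i>"] kI]) simp_all
  have Q2: "b2 * (- \<i> - of_real \<rho>) + of_real al * a2 = 0 \<and> b0 * a2 = b2 * a0"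
    by (rule quad_common[OF a2 a0 disc[of "- \<i>"] kJ]) simp_all
  have "b2 * (2 * \<i>) = (b2 * (\<i> - of_real \<rho>) + of_real al * a2) - (b2 * (- \<i> - of_real \<rho>) + of_real al * a2)"
    by (simp add: algebra_simps)
  then have "b2 * (2 * \<i>) = 0" using Q1 Q2 by simp
  then have b2: "b2 = 0" by simp
  with Q1 a2 have al: "al = 0" by simp
  from Q1 b2 a2 have b0: "b0 = 0" by simp
  have "of_real be = b2 + b0" unfolding b2_def b0_def by (simp add: field_simps)
  then have be: "be = 0" using b2 b0 by simp
  have "\<i> * of_real ga = b0 - b2" unfolding b2_def b0_def by (simp add: field_simps)
  then have ga: "ga = 0" using b2 b0 by simp
  show ?thesis using al be ga by simp
qed



lemma ident_zero:
  fixes f :: "complex \<Rightarrow> complex"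
  assumes hol: "f holomorphic_on UNIV" and v: "v0 < v1"
    and z: "\<And>v. v \<in> {v0<..<v1} \<Longrightarrow> f (of_real v) = 0"
  shows "f w = 0"
proof (rule analytic_continuation[OF hol open_UNIV connected_UNIV subset_UNIV, where U="of_real ` {v0<..<v1}" and \<xi>="of_real ((v0+v1)/2)"])
  show "complex_of_real ((v0 + v1) / 2) islimpt complex_of_real ` {v0<..<v1}"
    unfolding islimpt_approachable
  proof (intro allI impI)
    fix e :: real assume e: "e > 0"
    define h where "h = min (e/2) ((v1-v0)/4)"
    have h: "h > 0" "h < e" "h < (v1 - v0)/2" using e v unfolding h_def by (auto simp: min_def)
    show "\<exists>x'\<in>complex_of_real ` {v0<..<v1}. x' \<noteq> complex_of_real ((v0 + v1) / 2) \<and> dist x' (complex_of_real ((v0 + v1) / 2)) < e"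
    proof (intro bexI conjI)
      show "complex_of_real ((v0+v1)/2 + h) \<in> complex_of_real ` {v0<..<v1}" using h v by (intro imageI) (auto simp: field_simps)
      show "complex_of_real ((v0+v1)/2 + h) \<noteq> complex_of_real ((v0 + v1) / 2)" using h by (simp only: of_real_eq_iff)
      show "dist (complex_of_real ((v0+v1)/2 + h)) (complex_of_real ((v0 + v1) / 2)) < e"
        unfolding dist_of_real using h by (simp add: dist_real_def)
    qed
  qed
qed (use z in auto)

definition wf :: "'a \<Rightarrow> 'a \<Rightarrow> 'a \<Rightarrow> 'a \<Rightarrow> 'a::{real_normed_field,banach}" where
  "wf p q \<rho> v = p * cos v + q * sin v + \<rho>"
definition Af :: "'a \<Rightarrow> 'a \<Rightarrow> 'a \<Rightarrow> 'a \<Rightarrow> 'a::{real_normed_field,banach}" where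
  "Af p1 q1 r2 v = p1 * cos v + q1 * sin v + r2"
definition Sf :: "'a \<Rightarrow> 'a \<Rightarrow> 'a \<Rightarrow> 'a \<Rightarrow> 'a \<Rightarrow> 'a \<Rightarrow> 'a \<Rightarrow> 'a \<Rightarrow> 'a::{real_normed_field,banach}" where
  "Sf p q \<rho> p1 q1 r2 r v = 1 + (p + \<rho> * cos v)^2 + (q + \<rho> * sin v)^2 - r * Af p1 q1 r2 v"
definition D2f :: "'a \<Rightarrow> 'a \<Rightarrow> 'a \<Rightarrow> 'a \<Rightarrow> 'a::{real_normed_field,banach}" where
  "D2f p q \<rho> v = 1 + (wf p q \<rho> v)^2"

lemma Sf_aux: "1 + (p + \<rho> * c)^2 + (q + \<rho> * s)^2 - r * (p1 * c + q1 * s + r2) - ((1 + p^2 + q^2 + \<rho>^2 - r * r2) + (2*\<rho>*p - r*p1) * c + (2*\<rho>*q - r*q1) * s)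
     = \<rho>^2 * (s^2 + c^2 - 1)" for p :: "'a::comm_ring_1"
  by (simp add: algebra_simps power2_eq_square)

lemma Sf_lin: "Sf p q \<rho> p1 q1 r2 r (v::'a::{real_normed_field,banach}) =
   (1 + p^2 + q^2 + \<rho>^2 - r * r2) + (2*\<rho>*p - r*p1) * cos v + (2*\<rho>*q - r*q1) * sin v"
proof -
  have "Sf p q \<rho> p1 q1 r2 r v - ((1 + p^2 + q^2 + \<rho>^2 - r * r2) + (2*\<rho>*p - r*p1) * cos v + (2*\<rho>*q - r*q1) * sin v)
     = \<rho>^2 * ((sin v)^2 + (cos v)^2 - 1)"
    unfolding Sf_def Af_def by (rule Sf_aux)
  then show ?thesis by simp
qed

lemma of_real_Sf: "of_real (Sf p q \<rho> p1 q1 r2 r v) = (Sf (of_real p) (of_real q) (of_real \<rho>) (of_real p1) (of_real q1) (of_real r2) (of_real r) (of_real v) :: complex)"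
  by (simp add: Sf_def Af_def cos_of_real sin_of_real)
lemma of_real_Af: "of_real (Af p1 q1 r2 v) = (Af (of_real p1) (of_real q1) (of_real r2) (of_real v) :: complex)"
  by (simp add: Af_def cos_of_real sin_of_real)
lemma of_real_D2f: "of_real (D2f p q \<rho> v) = (D2f (of_real p) (of_real q) (of_real \<rho>) (of_real v) :: complex)"
  by (simp add: D2f_def wf_def cos_of_real sin_of_real)



lemma hol_Sf: "(\<lambda>z. Sf p q \<rho> p1 q1 r2 r (z::complex)) holomorphic_on UNIV"
  unfolding Sf_def Af_def by (intro holomorphic_intros)
lemma hol_Af: "(\<lambda>z. Af p1 q1 r2 (z::complex)) holomorphic_on UNIV"
  unfolding Af_def by (intro holomorphic_intros)
lemma hol_D2f: "(\<lambda>z. D2f p q \<rho> (z::complex)) holomorphic_on UNIV"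
  unfolding D2f_def wf_def by (intro holomorphic_intros)

lemma Sf_zero_lin:
  fixes p q \<rho> p1 q1 r2 r v0 v1 :: real
  assumes v: "v0 < v1" and z: "\<And>v. v \<in> {v0<..<v1} \<Longrightarrow> Sf p q \<rho> p1 q1 r2 r v = 0"
  shows "1+p^2+q^2+\<rho>^2 - r*r2 = 0 \<and> 2*\<rho>*p - r*p1 = 0 \<and> 2*\<rho>*q - r*q1 = 0"
proof -
  let ?h = "\<lambda>z::complex. Sf (of_real p) (of_real q) (of_real \<rho>) (of_real p1) (of_real q1) (of_real r2) (of_real r) z"
  have all: "Sf p q \<rho> p1 q1 r2 r x = 0" for x
  proof -
    have "?h (of_real x) = 0"
      by (rule ident_zero[OF hol_Sf v]) (simp add: of_real_Sf[symmetric] z)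
    then show ?thesis by (simp add: of_real_Sf[symmetric])
  qed
  have e0: "(1+p^2+q^2+\<rho>^2 - r*r2) + (2*\<rho>*p - r*p1) = 0" using all[of 0] unfolding Sf_lin by simp
  have e1: "(1+p^2+q^2+\<rho>^2 - r*r2) - (2*\<rho>*p - r*p1) = 0" using all[of pi] unfolding Sf_lin by simp
  have e2: "(1+p^2+q^2+\<rho>^2 - r*r2) + (2*\<rho>*q - r*q1) = 0" using all[of "pi/2"] unfolding Sf_lin by simp
  from e0 e1 e2 show ?thesis by linarith
qed

lemma core2:
  fixes p q \<rho> p1 q1 r2 r v0 v1 :: real
  assumes v: "v0 < v1"
    and star: "\<And>v. v \<in> {v0<..<v1} \<Longrightarrow> m * (Sf p q \<rho> p1 q1 r2 r v)^2 + (1-m)*n*r*(Sf p q \<rho> p1 q1 r2 r v)*(sqrt (D2f p q \<rho> v))^3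
        - n^2*r^2*(D2f p q \<rho> v)^3 + (1+m)^2*r*(Af p1 q1 r2 v)*(D2f p q \<rho> v) = 0"
    and mn: "m = -1" "n = 0"
  shows "1+p^2+q^2+\<rho>^2 - r*r2 = 0 \<and> 2*\<rho>*p - r*p1 = 0 \<and> 2*\<rho>*q - r*q1 = 0"
  by (rule Sf_zero_lin[OF v]) (use star mn in simp)

lemma core1:
  fixes p q \<rho> p1 q1 r2 r m n v0 v1 :: real
  assumes r: "r > 0" and m: "m \<noteq> 0" and v: "v0 < v1" and pq: "p \<noteq> 0 \<or> q \<noteq> 0"
    and star: "\<And>v. v \<in> {v0<..<v1} \<Longrightarrow> m * (Sf p q \<rho> p1 q1 r2 r v)^2 + (1-m)*n*r*(Sf p q \<rho> p1 q1 r2 r v)*(sqrt (D2f p q \<rho> v))^3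
        - n^2*r^2*(D2f p q \<rho> v)^3 + (1+m)^2*r*(Af p1 q1 r2 v)*(D2f p q \<rho> v) = 0"
  shows "m = -1 \<and> n = 0"
proof -
  define C where "C = (of_real :: real \<Rightarrow> complex)"
  define cS where "cS z = Sf (C p) (C q) (C \<rho>) (C p1) (C q1) (C r2) (C r) z" for z
  define cA where "cA z = Af (C p1) (C q1) (C r2) z" for z
  define cD where "cD z = D2f (C p) (C q) (C \<rho>) z" for z
  define cF where "cF z = (C m * (cS z)^2 - (C n)^2 * (C r)^2 * (cD z)^3 + (1 + C m)^2 * C r * cA z * cD z)^2
       - ((1 - C m) * C n * C r * cS z)^2 * (cD z)^3" for z
  have D2pos: "D2f p q \<rho> v \<ge> 1" for v :: real unfolding D2f_def by simp
  have F0: "cF z = 0" for z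
  proof (rule ident_zero[where f=cF, OF _ v])
    show "cF holomorphic_on UNIV" unfolding cF_def cS_def cA_def cD_def
      by (intro holomorphic_intros hol_Sf[THEN holomorphic_on_compose[unfolded o_def]] ; fail)?
        (unfold Sf_def Af_def D2f_def wf_def, intro holomorphic_intros)
  next
    fix v assume vi: "v \<in> {v0<..<v1}"
    define S where "S = Sf p q \<rho> p1 q1 r2 r v"
    define A where "A = Af p1 q1 r2 v"
    define D where "D = D2f p q \<rho> v"
    have sD: "(sqrt D)^2 = D" using D2pos[of v] unfolding D_def by simp
    have st: "m * S^2 + (1-m)*n*r*S*(sqrt D)^3 - n^2*r^2*D^3 + (1+m)^2*r*A*D = 0"
      using star[OF vi] unfolding S_def A_def D_def .
    have "m * S^2 - n^2*r^2*D^3 + (1+m)^2*r*A*D = - ((1-m)*n*r*S) * (sqrt D)^3" using st by (simp add: algebra_simps)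
    then have "(m * S^2 - n^2*r^2*D^3 + (1+m)^2*r*A*D)^2 = ((1-m)*n*r*S)^2 * ((sqrt D)^2)^3"
      by (simp add: power_mult_distrib power_mult[symmetric] mult.commute)
    then have "(m * S^2 - n^2*r^2*D^3 + (1+m)^2*r*A*D)^2 - ((1-m)*n*r*S)^2 * D^3 = 0" using sD by simp
    then have "C ((m * S^2 - n^2*r^2*D^3 + (1+m)^2*r*A*D)^2 - ((1-m)*n*r*S)^2 * D^3) = 0" by (simp add: C_def)
    then show "cF (complex_of_real v) = 0"
      unfolding cF_def cS_def cA_def cD_def C_def S_def A_def D_def
      by (simp add: of_real_Sf of_real_Af of_real_D2f)
  qed
  have abc: "1+p^2+q^2+\<rho>^2 - r*r2 = 0 \<and> 2*\<rho>*p - r*p1 = 0 \<and> 2*\<rho>*q - r*q1 = 0"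
  proof (rule roots_lemma[OF pq])
    fix z :: complex
    assume "1 + (complex_of_real p * cos z + complex_of_real q * sin z + complex_of_real \<rho>)^2 = 0"
    then have d0: "cD z = 0" unfolding cD_def D2f_def wf_def C_def .
    have "(C m * (cS z)^2)^2 = 0" using F0[of z] unfolding cF_def d0 by simp
    then have "cS z = 0" using m by (simp add: C_def)
    then show "complex_of_real (1+p^2+q^2+\<rho>^2 - r*r2) + complex_of_real (2*\<rho>*p - r*p1) * cos z + complex_of_real (2*\<rho>*q - r*q1) * sin z = 0"
      unfolding cS_def Sf_lin C_def by simp
  qed
  then have S0: "Sf p q \<rho> p1 q1 r2 r v = 0" for v unfolding Sf_lin by simp
  define cG where "cG z = (1 + C m)^2 * C r * cA z - (C n)^2 * (C r)^2 * (cD z)^2" for z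
  have G0: "cG z = 0" for z
  proof (rule ident_zero[where f=cG, OF _ v])
    show "cG holomorphic_on UNIV" unfolding cG_def cA_def cD_def
      by (unfold Sf_def Af_def D2f_def wf_def, intro holomorphic_intros)
  next
    fix v assume vi: "v \<in> {v0<..<v1}"
    define A where "A = Af p1 q1 r2 v"
    define D where "D = D2f p q \<rho> v"
    have Dp: "D > 0" using D2pos[of v] unfolding D_def by simp
    have "(1+m)^2*r*A*D - n^2*r^2*D^3 = 0"
      using star[OF vi] S0[of v] unfolding A_def D_def by simp
    then have "D * ((1+m)^2*r*A - n^2*r^2*D^2) = 0" by (simp add: algebra_simps power2_eq_square power3_eq_cube)
    then have "(1+m)^2*r*A - n^2*r^2*D^2 = 0" using Dp by simp
    then have "C ((1+m)^2*r*A - n^2*r^2*D^2) = 0" by (simp add: C_def)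
    then show "cG (complex_of_real v) = 0"
      unfolding cG_def cA_def cD_def C_def A_def D_def
      by (simp add: of_real_Af of_real_D2f)
  qed
  have m1: "m = -1"
  proof (rule ccontr)
    assume mm: "m \<noteq> -1"
    have "r2 = 0 \<and> p1 = 0 \<and> q1 = 0"
    proof (rule roots_lemma[OF pq])
      fix z :: complex
      assume "1 + (complex_of_real p * cos z + complex_of_real q * sin z + complex_of_real \<rho>)^2 = 0"
      then have d0: "cD z = 0" unfolding cD_def D2f_def wf_def C_def .
      have "(1 + C m)^2 * C r * cA z = 0" using G0[of z] unfolding cG_def d0 by simp
      moreover have "1 + C m \<noteq> 0"
      proof
        assume "1 + C m = 0"
        then have "C (1 + m) = C 0" by (simp add: C_def)
        then have "1 + m = 0" unfolding C_def by (simp only: of_real_eq_iff)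
        with mm show False by simp
      qed
      moreover have "C r \<noteq> 0" using r by (simp add: C_def)
      ultimately have "cA z = 0" by simp
      then show "complex_of_real r2 + complex_of_real p1 * cos z + complex_of_real q1 * sin z = 0"
        unfolding cA_def Af_def C_def by (simp add: algebra_simps)
    qed
    then have "1+p^2+q^2+\<rho>^2 = 0" using abc by simp
    moreover have "p^2 \<ge> 0" "q^2 \<ge> 0" "\<rho>^2 \<ge> 0" by auto
    ultimately show False by linarith
  qed
  have n0: "n = 0"
  proof -
    define v where "v = (v0 + v1)/2"
    have vi: "v \<in> {v0<..<v1}" using v unfolding v_def by auto
    define D where "D = D2f p q \<rho> v"
    have Dp: "D \<ge> 1" using D2pos[of v] unfolding D_def by simp
    have "n^2*r^2*D^3 = 0" using star[OF vi] S0[of v] m1 unfolding D_def by simp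
    then show ?thesis using Dp r by simp
  qed
  show ?thesis using m1 n0 by simp
qed


lemma S_aux: "(1 + (p + \<rho> * c)^2 + (q + \<rho> * s)^2 - r * A) - ((1 + (p * c + q * s + \<rho>)^2) + (q * c - p * s)^2 - r * A)
   = (p^2 + q^2 - \<rho>^2) * (1 - (s^2 + c^2))" for p :: "'a::comm_ring_1"
  by (simp add: algebra_simps power2_eq_square)

lemma hk_nonneg:
  fixes p q \<rho> p1 q1 r2 r v :: real
  assumes r: "r > 0"
  shows "(Sf p q \<rho> p1 q1 r2 r v / (2*r*(sqrt (D2f p q \<rho> v))^3))^2 - (- Af p1 q1 r2 v / (r * (sqrt (D2f p q \<rho> v))^4)) \<ge> 0"
proof -
  define S where "S = Sf p q \<rho> p1 q1 r2 r v"
  define A where "A = Af p1 q1 r2 v"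
  define Dd where "Dd = sqrt (D2f p q \<rho> v)"
  define t where "t = q * cos v - p * sin v"
  have D1: "D2f p q \<rho> v \<ge> 1" unfolding D2f_def by simp
  have Ddp: "Dd > 0" unfolding Dd_def using D1 by simp
  have Dd2: "Dd^2 = D2f p q \<rho> v" unfolding Dd_def using D1 by simp
  have SD: "S = Dd^2 + t^2 - r * A"
  proof -
    have "S - (Dd^2 + t^2 - r * A) = (p^2 + q^2 - \<rho>^2) * (1 - ((sin v)^2 + (cos v)^2))"
      unfolding S_def Dd2 t_def Sf_def D2f_def wf_def A_def by (rule S_aux)
    then show ?thesis by simp
  qed
  have eq: "(S / (2*r*Dd^3))^2 - (- A / (r * Dd^4)) = (S^2 + 4*r*A*Dd^2) / (4*r^2*Dd^6)"
    using r Ddp by (simp add: field_simps power2_eq_square eval_nat_numeral)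
  have num: "S^2 + 4*r*A*Dd^2 = (Dd^2 + r*A - t^2)^2 + 4*t^2*Dd^2"
    unfolding SD by (simp add: algebra_simps power2_eq_square)
  have "S^2 + 4*r*A*Dd^2 \<ge> 0" unfolding num by (intro add_nonneg_nonneg) auto
  then have "(S / (2*r*Dd^3))^2 - (- A / (r * Dd^4)) \<ge> 0" unfolding eq using r Ddp by simp
  then show ?thesis unfolding S_def A_def Dd_def .
qed

lemma star0:
  fixes H K m n :: real
  assumes "H^2 - K \<ge> 0"
    and "H + sqrt(H^2-K) = m*(H - sqrt(H^2-K)) + n \<or> H - sqrt(H^2-K) = m*(H + sqrt(H^2-K)) + n"
  shows "m*(2*H)^2 + (1-m)*(2*H)*n - n^2 - (1+m)^2*K = 0"
proof -
  define s where "s = sqrt (H^2 - K)"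
  have K: "K = H^2 - s^2" unfolding s_def using assms(1) by simp
  from assms(2) have "n = H + s - m*(H - s) \<or> n = H - s - m*(H + s)" unfolding s_def by auto
  then show ?thesis
  proof
    assume n1: "n = H + s - m*(H - s)"
    show ?thesis unfolding K n1 by (simp add: algebra_simps power2_eq_square)
  next
    assume n1: "n = H - s - m*(H + s)"
    show ?thesis unfolding K n1 by (simp add: algebra_simps power2_eq_square)
  qed
qed

lemma star_conv:
  fixes S A Dd r m n H K :: real
  assumes r: "r > 0" and Dd: "Dd > 0" and H: "H = S / (2*r*Dd^3)" and K: "K = - A / (r * Dd^4)"
    and st: "m*(2*H)^2 + (1-m)*(2*H)*n - n^2 - (1+m)^2*K = 0"
  shows "m * S^2 + (1-m)*n*r*S*Dd^3 - n^2*r^2*(Dd^2)^3 + (1+m)^2*r*A*(Dd^2) = 0"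
proof -
  have "r^2 * Dd^6 * (m*(2*H)^2 + (1-m)*(2*H)*n - n^2 - (1+m)^2*K) = m * S^2 + (1-m)*n*r*S*Dd^3 - n^2*r^2*(Dd^2)^3 + (1+m)^2*r*A*(Dd^2)"
    unfolding H K using r Dd by (simp add: field_simps power2_eq_square eval_nat_numeral)
  then show ?thesis using st by simp
qed



lemma smooth_d0: "smooth_on S f \<Longrightarrow> t \<in> S \<Longrightarrow> (f has_real_derivative deriv f t) (at t)"
  unfolding smooth_on_def DERIV_deriv_iff_real_differentiable by (metis funpow_0)
lemma smooth_d1: "smooth_on S f \<Longrightarrow> t \<in> S \<Longrightarrow> (deriv f has_real_derivative deriv (deriv f) t) (at t)"
proof -
  assume "smooth_on S f" "t \<in> S"
  then have "((deriv ^^ 1) f) differentiable (at t)" unfolding smooth_on_def by blast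
  then show ?thesis unfolding DERIV_deriv_iff_real_differentiable by simp
qed

lemma const_on_I:
  fixes g g' :: "real \<Rightarrow> real"
  assumes "\<And>t. t \<in> {u0<..<u1} \<Longrightarrow> (g has_real_derivative 0) (at t)" "x \<in> {u0<..<u1}" "y \<in> {u0<..<u1}"
  shows "g x = g y"
proof -
  obtain c where "\<forall>t\<in>{u0<..<u1}. g t = c"
    using has_field_derivative_zero_constant[of "{u0<..<u1}" g] assms(1)
    by (metis convex_real_interval(8) has_field_derivative_at_within)
  then show ?thesis using assms by auto
qed

theorem theorem2:
  fixes a b r :: "real \<Rightarrow> real" and m n u0 u1 v0 v1 :: real
  assumes "u0 < u1" and "v0 < v1"
    and "smooth_on {u0<..<u1} a" and "smooth_on {u0<..<u1} b" and "smooth_on {u0<..<u1} r"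
    and "\<forall>u\<in>{u0<..<u1}. r u > 0"
    and "LW_surface (riemann_type_surf a b r) ({u0<..<u1} \<times> {v0<..<v1}) m n"
  shows "(\<exists>ca cb. \<forall>u\<in>{u0<..<u1}. a u = ca \<and> b u = cb)
    \<or> (m = -1 \<and> n = 0 \<and>
       (\<exists>lam mu. lam^2 + mu^2 \<noteq> 0 \<and>
          (\<forall>u\<in>{u0<..<u1}. deriv a u = lam * (r u)^2 \<and> deriv b u = mu * (r u)^2 \<and>
             1 + (lam^2 + mu^2) * (r u)^4 + (deriv r u)^2 - r u * deriv (deriv r) u = 0)))"
proof -
  define I where "I = {u0<..<u1}"
  define X where "X = riemann_type_surf a b r"
  have Io: "open I" unfolding I_def by simp
  have sa: "smooth_on I a" and sb: "smooth_on I b" and sr: "smooth_on I r" using assms unfolding I_def by auto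
  have rpos: "\<And>u. u \<in> I \<Longrightarrow> r u > 0" using assms(6) unfolding I_def by auto
  have m0: "m \<noteq> 0" and numb: "\<forall>(u,v)\<in>I \<times> {v0<..<v1}. kappa1 X u v \<noteq> kappa2 X u v"
    and rel: "(\<forall>(u,v)\<in>I \<times> {v0<..<v1}. kappa1 X u v = m * kappa2 X u v + n) \<or>
      (\<forall>(u,v)\<in>I \<times> {v0<..<v1}. kappa2 X u v = m * kappa1 X u v + n)"
    using assms(7) unfolding LW_surface_def X_def I_def by auto
  have da: "\<And>t. t \<in> I \<Longrightarrow> (a has_real_derivative deriv a t) (at t)" using smooth_d0[OF sa] .
  have db: "\<And>t. t \<in> I \<Longrightarrow> (b has_real_derivative deriv b t) (at t)" using smooth_d0[OF sb] .
  have dr: "\<And>t. t \<in> I \<Longrightarrow> (r has_real_derivative deriv r t) (at t)" using smooth_d0[OF sr] .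
  have dda: "\<And>t. t \<in> I \<Longrightarrow> (deriv a has_real_derivative deriv (deriv a) t) (at t)" using smooth_d1[OF sa] .
  have ddb: "\<And>t. t \<in> I \<Longrightarrow> (deriv b has_real_derivative deriv (deriv b) t) (at t)" using smooth_d1[OF sb] .
  have ddr: "\<And>t. t \<in> I \<Longrightarrow> (deriv r has_real_derivative deriv (deriv r) t) (at t)" using smooth_d1[OF sr] .
  have star: "m * (Sf (deriv a u) (deriv b u) (deriv r u) (deriv (deriv a) u) (deriv (deriv b) u) (deriv (deriv r) u) (r u) v)^2
     + (1-m)*n*(r u)*(Sf (deriv a u) (deriv b u) (deriv r u) (deriv (deriv a) u) (deriv (deriv b) u) (deriv (deriv r) u) (r u) v)
        *(sqrt (D2f (deriv a u) (deriv b u) (deriv r u) v))^3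
     - n^2*(r u)^2*(D2f (deriv a u) (deriv b u) (deriv r u) v)^3
     + (1+m)^2*(r u)*(Af (deriv (deriv a) u) (deriv (deriv b) u) (deriv (deriv r) u) v)*(D2f (deriv a u) (deriv b u) (deriv r u) v) = 0"
    if u: "u \<in> I" and v: "v \<in> {v0<..<v1}" for u v
  proof -
    define p where "p = deriv a u"
    define q where "q = deriv b u"
    define \<rho> where "\<rho> = deriv r u"
    define p1 where "p1 = deriv (deriv a) u"
    define q1 where "q1 = deriv (deriv b) u"
    define r2 where "r2 = deriv (deriv r) u"
    define R where "R = r u"
    have R: "R > 0" unfolding R_def using rpos[OF u] .
    define S where "S = Sf p q \<rho> p1 q1 r2 R v"
    define A where "A = Af p1 q1 r2 v"
    define Dd where "Dd = sqrt (D2f p q \<rho> v)"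
    have D1: "D2f p q \<rho> v \<ge> 1" unfolding D2f_def by simp
    have Ddp: "Dd > 0" unfolding Dd_def using D1 by simp
    have Dd2: "Dd^2 = D2f p q \<rho> v" unfolding Dd_def using D1 by simp
    have hu: "Xu X u v = vector [p + \<rho> * cos v, q + \<rho> * sin v, 1]"
      unfolding X_def p_def q_def \<rho>_def by (rule Xu_eq[OF Io da db dr u])
    have hv: "Xv X u v = vector [- R * sin v, R * cos v, 0]"
      unfolding X_def R_def by (rule Xv_eq[OF Io da db dr])
    have huu: "Xuu X u v = vector [p1 + r2 * cos v, q1 + r2 * sin v, 0]"
      unfolding X_def p1_def q1_def r2_def by (rule Xuu_eq[OF Io da db dr u dda[OF u] ddb[OF u] ddr[OF u]])
    have huv: "Xuv X u v = vector [- \<rho> * sin v, \<rho> * cos v, 0]"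
      unfolding X_def \<rho>_def by (rule Xuv_eq[OF Io da db dr u])
    have hvv: "Xvv X u v = vector [- R * cos v, - R * sin v, 0]"
      unfolding X_def R_def by (rule Xvv_eq[OF Io da db dr])
    have cs: "(cos v)^2 + (sin v)^2 = 1" by simp
    have Hf: "mean_curv X u v = S / (2 * R * Dd^3)"
      using curv_formulas(1)[OF hu hv huu huv hvv cs R]
      unfolding S_def Dd_def Sf_def Af_def D2f_def wf_def A_def .
    have Kf: "gauss_curv X u v = - A / (R * Dd^4)"
      using curv_formulas(2)[OF hu hv huu huv hvv cs R]
      unfolding S_def Dd_def Sf_def Af_def D2f_def wf_def A_def .
    have hk: "(mean_curv X u v)^2 - gauss_curv X u v \<ge> 0"
      unfolding Hf Kf S_def A_def Dd_def by (rule hk_nonneg[OF R])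
    have kr: "kappa1 X u v = m * kappa2 X u v + n \<or> kappa2 X u v = m * kappa1 X u v + n"
      using rel u v by auto
    have s0: "m*(2*mean_curv X u v)^2 + (1-m)*(2*mean_curv X u v)*n - n^2 - (1+m)^2*gauss_curv X u v = 0"
      by (rule star0[OF hk]) (use kr in \<open>simp add: kappa1_def kappa2_def\<close>)
    have "m * S^2 + (1-m)*n*R*S*Dd^3 - n^2*R^2*(Dd^2)^3 + (1+m)^2*R*A*(Dd^2) = 0"
      by (rule star_conv[OF R Ddp Hf Kf s0])
    then show ?thesis unfolding Dd2 unfolding S_def A_def Dd_def p_def q_def \<rho>_def p1_def q1_def r2_def R_def .
  qed
  have mid: "(u0+u1)/2 \<in> I" unfolding I_def using assms(1) by auto
  show ?thesis
  proof (cases "\<forall>u\<in>I. deriv a u = 0 \<and> deriv b u = 0")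
    case True
    have ca: "a u = a ((u0+u1)/2)" if "u \<in> I" for u
      by (rule const_on_I[of u0 u1 a]) (use True da that mid in \<open>auto simp: I_def\<close>)
    have cb: "b u = b ((u0+u1)/2)" if "u \<in> I" for u
      by (rule const_on_I[of u0 u1 b]) (use True db that mid in \<open>auto simp: I_def\<close>)
    show ?thesis using ca cb unfolding I_def by blast
  next
    case False
    then obtain us where us: "us \<in> I" "deriv a us \<noteq> 0 \<or> deriv b us \<noteq> 0" by auto
    have mn: "m = -1 \<and> n = 0"
      by (rule core1[OF rpos[OF us(1)] m0 assms(2) us(2) star[OF us(1)]])
    have abc: "1 + (deriv a u)^2 + (deriv b u)^2 + (deriv r u)^2 - r u * deriv (deriv r) u = 0 \<and>
        2 * deriv r u * deriv a u - r u * deriv (deriv a) u = 0 \<and> 2 * deriv r u * deriv b u - r u * deriv (deriv b) u = 0"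
      if u: "u \<in> I" for u
      using core2[OF assms(2) star[OF u]] mn by simp
    have const_ratio: "deriv f u / (r u * r u) = deriv f us / (r us * r us)"
      if u: "u \<in> I" and df: "\<And>t. t \<in> I \<Longrightarrow> (f has_real_derivative deriv f t) (at t)"
        and ddf: "\<And>t. t \<in> I \<Longrightarrow> (deriv f has_real_derivative deriv (deriv f) t) (at t)"
        and rel2: "\<And>t. t \<in> I \<Longrightarrow> 2 * deriv r t * deriv f t - r t * deriv (deriv f) t = 0"
      for f u
    proof (rule const_on_I[of u0 u1 "\<lambda>u. deriv f u / (r u * r u)"])
      fix t assume t: "t \<in> {u0<..<u1}"
      then have tI: "t \<in> I" unfolding I_def .
      have rt: "r t * r t \<noteq> 0" using rpos[OF tI] by simp
      define N where "N = deriv (deriv f) t * (r t * r t) - deriv f t * (deriv r t * r t + deriv r t * r t)"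
      have D: "((\<lambda>u. deriv f u / (r u * r u)) has_real_derivative N / ((r t * r t) * (r t * r t))) (at t)"
        unfolding N_def by (rule DERIV_divide[OF ddf[OF tI] DERIV_mult[OF dr[OF tI] dr[OF tI]] rt])
      have "N = - r t * (2 * deriv r t * deriv f t - r t * deriv (deriv f) t)"
        unfolding N_def by (simp add: algebra_simps)
      then have N0: "N = 0" using rel2[OF tI] by simp
      show "((\<lambda>u. deriv f u / (r u * r u)) has_real_derivative 0) (at t)"
        using D unfolding N0 by simp
    qed (use u us(1) in \<open>auto simp: I_def\<close>)
    define lam where "lam = deriv a us / (r us * r us)"
    define mu where "mu = deriv b us / (r us * r us)"
    have la: "deriv a u = lam * (r u)^2" if u: "u \<in> I" for u
    proof -
      have "deriv a u / (r u * r u) = lam" unfolding lam_def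
        by (rule const_ratio[OF u da dda]) (use abc in auto)
      then show ?thesis using rpos[OF u] by (simp add: field_simps power2_eq_square)
    qed
    have mb: "deriv b u = mu * (r u)^2" if u: "u \<in> I" for u
    proof -
      have "deriv b u / (r u * r u) = mu" unfolding mu_def
        by (rule const_ratio[OF u db ddb]) (use abc in auto)
      then show ?thesis using rpos[OF u] by (simp add: field_simps power2_eq_square)
    qed
    have nz: "lam^2 + mu^2 \<noteq> 0"
    proof
      assume "lam^2 + mu^2 = 0"
      then have "lam = 0" "mu = 0" by (auto simp: add_nonneg_eq_0_iff)
      then show False using us la[OF us(1)] mb[OF us(1)] by simp
    qed
    have third: "1 + (lam^2 + mu^2) * (r u)^4 + (deriv r u)^2 - r u * deriv (deriv r) u = 0" if u: "u \<in> I" for u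
    proof -
      have "(lam^2 + mu^2) * (r u)^4 = (deriv a u)^2 + (deriv b u)^2"
        unfolding la[OF u] mb[OF u] by (simp add: algebra_simps power2_eq_square eval_nat_numeral)
      then show ?thesis using abc[OF u] by simp
    qed
    show ?thesis using mn nz la mb third unfolding I_def by blast
  qed
qed


end
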